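(* Let $\Sigma_C\subseteq N_C$ and $\Sigma_R\subseteq N_R$ be finite, let $B\in N_C\setminus\Sigma_C$, and let $\mathcal R$ be the TBox consisting of the axioms $B\sqsubseteq A$ for every $A\in\Sigma_C$ and $B\sqsubseteq\forall r.B$ for every $r\in\Sigma_R$. Let $\mathcal J$ be a model of $\mathcal R$ and $\mathcal I$ an interpretation with $\Delta^{\mathcal I}=\Delta^{\mathcal J}\setminus B^{\mathcal J}$, $A^{\mathcal I}=A^{\mathcal J}\setminus B^{\mathcal J}$ for every $A\in N_C$, and $r^{\mathcal I}=\{(x,y)\in r^{\mathcal J}\mid x\notin B^{\mathcal J},\ y\notin B^{\mathcal J}\}$ for every $r\in N_R$. Then for every $\mathcal{FL}_{\bot\mathit{reg}}$ concept description $K$ containing only concept names from $\Sigma_C$ and role names from $\Sigma_R$ we have $K^{\mathcal I}=(K^B)^{\mathcal J}\setminus B^{\mathcal J}$, where $K^B$ is obtained from $K$ by replacing every occurrence of $\bot$ with $B$.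
   Context: Let $N_C$ and $N_R$ be disjoint countably infinite sets of concept names and role names. Regular role expressions are generated by $E ::= \emptyset \mid \varepsilon \mid r \mid (E+E) \mid (EE) \mid E^{*}$ with $r\in N_R$, with languages $\mathcal L(E)\subseteq N_R^*$. $\mathcal{FL}_{\bot\mathit{reg}}$ concept descriptions: $C ::= A \mid \top \mid \bot \mid (C\sqcap C) \mid \forall E.C$ with $A\in N_C$. An interpretation $\mathcal I$ has a domain $\Delta^{\mathcal I}$, $A^{\mathcal I}\subseteq\Delta^{\mathcal I}$, $r^{\mathcal I}\subseteq(\Delta^{\mathcal I})^2$; $E^{\mathcal I}$ is the union over $r_1\cdots r_n\in\mathcal L(E)$ of $r_1^{\mathcal I}\circ\cdots\circ r_n^{\mathcal I}$ (identity for the empty word); $\top^{\mathcal I}=\Delta^{\mathcal I}$, $\bot^{\mathcal I}=\emptyset$, $\sqcap$ is intersection, $(\forall E.C)^{\mathcal I}=\{x\in\Delta^{\mathcal I}\mid y\in C^{\mathcal I}$ whenever $(x,y)\in E^{\mathcal I}\}$. $\mathcal J$ is a model of a TBox (finite set of axioms $K\sqsubseteq M$) if $K^{\mathcal J}\subseteq M^{\mathcal J}$ for all its axioms. *)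

theory Defs
  imports Main
begin

datatype 'r rexp = Empty | Eps | Role 'r | Plus "'r rexp" "'r rexp"
  | Conc "'r rexp" "'r rexp" | Star "'r rexp"

fun lang :: "'r rexp \<Rightarrow> 'r list set" where
  "lang Empty = {}"
| "lang Eps = {[]}"
| "lang (Role r) = {[r]}"
| "lang (Plus e f) = lang e \<union> lang f"
| "lang (Conc e f) = {u @ v | u v. u \<in> lang e \<and> v \<in> lang f}"
| "lang (Star e) = {concat ws | ws. set ws \<subseteq> lang e}"

record ('c, 'r, 'd) interp =
  dom :: "'d set"
  cint :: "'c \<Rightarrow> 'd set"
  rint :: "'r \<Rightarrow> ('d \<times> 'd) set"

definition is_interp :: "('c, 'r, 'd) interp \<Rightarrow> bool" where
  "is_interp I \<longleftrightarrow> (\<forall>A. cint I A \<subseteq> dom I) \<and> (\<forall>r. rint I r \<subseteq> dom I \<times> dom I)"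

fun word_int :: "('c, 'r, 'd) interp \<Rightarrow> 'r list \<Rightarrow> ('d \<times> 'd) set" where
  "word_int I [] = Id_on (dom I)"
| "word_int I (r # w) = rint I r O word_int I w"

definition rexp_int :: "('c, 'r, 'd) interp \<Rightarrow> 'r rexp \<Rightarrow> ('d \<times> 'd) set" where
  "rexp_int I E = (\<Union>w \<in> lang E. word_int I w)"

datatype ('c, 'r) concept = CName 'c | Top | Bot
  | CAnd "('c, 'r) concept" "('c, 'r) concept"
  | All "'r rexp" "('c, 'r) concept"

fun cext :: "('c, 'r, 'd) interp \<Rightarrow> ('c, 'r) concept \<Rightarrow> 'd set" where
  "cext I (CName A) = cint I A"
| "cext I Top = dom I"
| "cext I Bot = {}"
| "cext I (CAnd C D) = cext I C \<inter> cext I D"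
| "cext I (All E C) = {x \<in> dom I. \<forall>y. (x, y) \<in> rexp_int I E \<longrightarrow> y \<in> cext I C}"

fun roles_rexp :: "'r rexp \<Rightarrow> 'r set" where
  "roles_rexp Empty = {}"
| "roles_rexp Eps = {}"
| "roles_rexp (Role r) = {r}"
| "roles_rexp (Plus e f) = roles_rexp e \<union> roles_rexp f"
| "roles_rexp (Conc e f) = roles_rexp e \<union> roles_rexp f"
| "roles_rexp (Star e) = roles_rexp e"

fun cnames :: "('c, 'r) concept \<Rightarrow> 'c set" where
  "cnames (CName A) = {A}"
| "cnames Top = {}"
| "cnames Bot = {}"
| "cnames (CAnd C D) = cnames C \<union> cnames D"
| "cnames (All E C) = cnames C"

fun rnames :: "('c, 'r) concept \<Rightarrow> 'r set" where
  "rnames (CName A) = {}"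
| "rnames Top = {}"
| "rnames Bot = {}"
| "rnames (CAnd C D) = rnames C \<union> rnames D"
| "rnames (All E C) = roles_rexp E \<union> rnames C"

fun replace_bot :: "'c \<Rightarrow> ('c, 'r) concept \<Rightarrow> ('c, 'r) concept" where
  "replace_bot B (CName A) = CName A"
| "replace_bot B Top = Top"
| "replace_bot B Bot = CName B"
| "replace_bot B (CAnd C D) = CAnd (replace_bot B C) (replace_bot B D)"
| "replace_bot B (All E C) = All E (replace_bot B C)"

type_synonym ('c, 'r) tbox = "(('c, 'r) concept \<times> ('c, 'r) concept) set"

definition is_model :: "('c, 'r, 'd) interp \<Rightarrow> ('c, 'r) tbox \<Rightarrow> bool" where
  "is_model J T \<longleftrightarrow> (\<forall>(K, M) \<in> T. cext J K \<subseteq> cext J M)"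

end

theory Submission
  imports Defs
begin

lemma lang_roles: "w \<in> lang E \<Longrightarrow> set w \<subseteq> roles_rexp E"
proof (induction E arbitrary: w)
  case (Star e)
  then obtain ws where "w = concat ws" "set ws \<subseteq> lang e" by auto
  then show ?case using Star.IH by auto
next
  case (Conc e f)
  then show ?case by fastforce
qed auto

theorem lemma7:
  fixes SigC :: "'c set" and SigR :: "'r set" and B :: 'c
    and R :: "('c, 'r) tbox"
    and J I :: "('c, 'r, 'd) interp"
  assumes "infinite (UNIV :: 'c set)" and "infinite (UNIV :: 'r set)"
    and "finite SigC" and "finite SigR" and "B \<notin> SigC"
    and "R = {(CName B, CName A) | A. A \<in> SigC} \<union> {(CName B, All (Role r) (CName B)) | r. r \<in> SigR}"
    and "is_interp J" and "is_model J R"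
    and "dom I = dom J - cint J B"
    and "\<And>A. cint I A = cint J A - cint J B"
    and "\<And>r. rint I r = {(x, y) \<in> rint J r. x \<notin> cint J B \<and> y \<notin> cint J B}"
  shows "\<forall>K. cnames K \<subseteq> SigC \<and> rnames K \<subseteq> SigR \<longrightarrow>
           cext I K = cext J (replace_bot B K) - cint J B"
proof -
  note R = assms(6) and IJ = assms(7) and M = assms(8) and D = assms(9)
    and CI = assms(10) and RI = assms(11)
  have BA: "cint J B \<subseteq> cint J A" if "A \<in> SigC" for A
  proof -
    have "(CName B, CName A) \<in> R" using that R by auto
    then show ?thesis using M unfolding is_model_def by fastforce
  qed
  have Bdom: "cint J B \<subseteq> dom J" using IJ unfolding is_interp_def by auto
  have rdom: "rint J r \<subseteq> dom J \<times> dom J" for r using IJ unfolding is_interp_def by auto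
  have Br: "z \<in> cint J B" if "y \<in> cint J B" "(y,z) \<in> rint J r" "r \<in> SigR" for y z r
  proof -
    have "(CName B, All (Role r) (CName B)) \<in> R" using that(3) R by auto
    then have "cext J (CName B) \<subseteq> cext J (All (Role r) (CName B))"
      using M unfolding is_model_def by fastforce
    moreover have "(y,z) \<in> rexp_int J (Role r)"
      using that(2) rdom[of r] by (auto simp: rexp_int_def)
    ultimately show ?thesis using that(1) by auto
  qed
  have Bw: "z \<in> cint J B" if "y \<in> cint J B" "(y,z) \<in> word_int J w" "set w \<subseteq> SigR" for y z w
    using that
  proof (induction w arbitrary: y)
    case (Cons r w)
    then obtain u where "(y,u) \<in> rint J r" "(u,z) \<in> word_int J w" by auto
    then show ?case using Cons Br by auto
  qed auto
  have IJw: "word_int I w \<subseteq> word_int J w" for w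
    by (induction w) (auto simp: D RI)
  have Idom: "(x,y) \<in> word_int I w \<Longrightarrow> y \<in> dom I" for x y w
    by (induction w arbitrary: x) auto
  have Jw: "y \<in> cint J B \<or> (x,y) \<in> word_int I w"
    if "(x,y) \<in> word_int J w" "x \<in> dom I" "set w \<subseteq> SigR" for x y w
    using that
  proof (induction w arbitrary: x)
    case Nil then show ?case by (auto simp: D)
  next
    case (Cons r w)
    then obtain u where u: "(x,u) \<in> rint J r" "(u,y) \<in> word_int J w" by auto
    show ?case
    proof (cases "u \<in> cint J B")
      case True then show ?thesis using Bw u Cons.prems by auto
    next
      case False
      then have "(x,u) \<in> rint I r" "u \<in> dom I" using u Cons.prems rdom[of r] by (auto simp: RI D)
      then show ?thesis using Cons.IH[of u] u Cons.prems by auto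
    qed
  qed
  have Bin: "cnames K \<subseteq> SigC \<Longrightarrow> rnames K \<subseteq> SigR \<Longrightarrow> cint J B \<subseteq> cext J (replace_bot B K)" for K
  proof (induction K)
    case (CName A) then show ?case using BA by auto
  next
    case Top then show ?case using Bdom by auto
  next
    case (All E C)
    show ?case
    proof
      fix y assume y: "y \<in> cint J B"
      have "z \<in> cext J (replace_bot B C)" if yz: "(y,z) \<in> rexp_int J E" for z
      proof -
        obtain w where "w \<in> lang E" "(y,z) \<in> word_int J w" using yz by (auto simp: rexp_int_def)
        then have "z \<in> cint J B" using Bw y lang_roles All.prems by fastforce
        then show ?thesis using All by auto
      qed
      then show "y \<in> cext J (replace_bot B (All E C))" using y Bdom by auto
    qed
  qed auto
  show ?thesis
  proof (intro allI impI)
    fix K :: "('c,'r) concept"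
    assume "cnames K \<subseteq> SigC \<and> rnames K \<subseteq> SigR"
    then show "cext I K = cext J (replace_bot B K) - cint J B"
    proof (induction K)
      case (CName A) then show ?case by (simp add: CI)
    next
      case Top then show ?case by (simp add: D)
    next
      case Bot then show ?case by simp
    next
      case (CAnd C1 C2) then show ?case by auto
    next
      case (All E C)
      have IH: "cext I C = cext J (replace_bot B C) - cint J B" using All by auto
      have Cin: "cint J B \<subseteq> cext J (replace_bot B C)" using Bin All.prems by auto
      show ?case
      proof
        show "cext I (All E C) \<subseteq> cext J (replace_bot B (All E C)) - cint J B"
        proof
          fix x assume x: "x \<in> cext I (All E C)"
          then have xd: "x \<in> dom I" by simp
          have "y \<in> cext J (replace_bot B C)" if xy: "(x,y) \<in> rexp_int J E" for y
          proof -
            obtain w where w: "w \<in> lang E" "(x,y) \<in> word_int J w" using xy by (auto simp: rexp_int_def)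
            have "set w \<subseteq> SigR" using lang_roles[OF w(1)] All.prems by auto
            then have "y \<in> cint J B \<or> (x,y) \<in> word_int I w" using Jw w xd by blast
            moreover have "(x,y) \<in> word_int I w \<Longrightarrow> y \<in> cext I C"
              using x w(1) by (auto simp: rexp_int_def)
            ultimately show ?thesis using Cin IH by auto
          qed
          then show "x \<in> cext J (replace_bot B (All E C)) - cint J B" using xd D by auto
        qed
      next
        show "cext J (replace_bot B (All E C)) - cint J B \<subseteq> cext I (All E C)"
        proof
          fix x assume x: "x \<in> cext J (replace_bot B (All E C)) - cint J B"
          then have xd: "x \<in> dom I" using D by auto
          have "y \<in> cext I C" if xy: "(x,y) \<in> rexp_int I E" for y
          proof -
            obtain w where w: "w \<in> lang E" "(x,y) \<in> word_int I w" using xy by (auto simp: rexp_int_def)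
            then have "(x,y) \<in> rexp_int J E" using IJw by (auto simp: rexp_int_def)
            then have "y \<in> cext J (replace_bot B C)" using x by auto
            moreover have "y \<in> dom I" using Idom w(2) .
            ultimately show ?thesis using IH D by auto
          qed
          then show "x \<in> cext I (All E C)" using xd by auto
        qed
      qed
    qed
  qed
qed

end
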